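(* Let $B(\mathbb{R})$ be the C*-algebra of all bounded complex-valued functions on $\mathbb{R}$ (pointwise operations, supremum norm), and let $A=\{f\in B(\mathbb{R}): \{t: f(t)\neq 0\}\text{ is countable}\}$. Then $A$ is a non-unital, monotone $\sigma$-complete commutative C*-algebra (so its only maximal abelian self-adjoint subalgebra, $A$ itself, is monotone $\sigma$-complete), but $A$ is not a Rickart C*-algebra.
   Context: A C*-algebra $B$ is monotone $\sigma$-complete if every norm-bounded monotone increasing sequence in $B_{sa}$ has a supremum in $B_{sa}$. A C*-algebra $B$ is Rickart if for each $a\in B$ there is a projection $p\in B$ such that $\{z\in B: az=0\}=pB$. *)

theory Defs
  imports "HOL-Analysis.Analysis"
begin

text \<open>Subalgebras are treated as subsets of this concrete algebra.\<close>

type_synonym fn = "real \<Rightarrow> complex"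

definition BR :: "fn set" where
  "BR = {f. bounded (range f)}"

definition supnorm :: "fn \<Rightarrow> real" where
  "supnorm f = (SUP t. cmod (f t))"

definition fadd :: "fn \<Rightarrow> fn \<Rightarrow> fn" where "fadd f g = (\<lambda>t. f t + g t)"
definition fmul :: "fn \<Rightarrow> fn \<Rightarrow> fn" where "fmul f g = (\<lambda>t. f t * g t)"
definition fscale :: "complex \<Rightarrow> fn \<Rightarrow> fn" where "fscale c f = (\<lambda>t. c * f t)"
definition fstar :: "fn \<Rightarrow> fn" where "fstar f = (\<lambda>t. cnj (f t))"
definition fdiff :: "fn \<Rightarrow> fn \<Rightarrow> fn" where "fdiff f g = (\<lambda>t. f t - g t)"

definition A_alg :: "fn set" where
  "A_alg = {f \<in> BR. countable {t. f t \<noteq> 0}}"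

definition cstar_subalgebra :: "fn set \<Rightarrow> bool" where
  "cstar_subalgebra S \<longleftrightarrow> S \<subseteq> BR \<and> (\<lambda>t. 0) \<in> S \<and>
     (\<forall>f\<in>S. \<forall>g\<in>S. fadd f g \<in> S \<and> fmul f g \<in> S) \<and>
     (\<forall>c. \<forall>f\<in>S. fscale c f \<in> S) \<and> (\<forall>f\<in>S. fstar f \<in> S) \<and>
     (\<forall>x g. (\<forall>n. x n \<in> S) \<and> g \<in> BR \<and>
        (\<lambda>n. supnorm (fdiff (x n) g)) \<longlonglongrightarrow> 0 \<longrightarrow> g \<in> S)"

definition commutative_alg :: "fn set \<Rightarrow> bool" where
  "commutative_alg S \<longleftrightarrow> (\<forall>f\<in>S. \<forall>g\<in>S. fmul f g = fmul g f)"

definition unital_alg :: "fn set \<Rightarrow> bool" where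
  "unital_alg S \<longleftrightarrow> (\<exists>e\<in>S. \<forall>f\<in>S. fmul e f = f \<and> fmul f e = f)"

definition selfadj :: "fn \<Rightarrow> bool" where
  "selfadj f \<longleftrightarrow> fstar f = f"

definition positive_in :: "fn set \<Rightarrow> fn \<Rightarrow> bool" where
  "positive_in S a \<longleftrightarrow> (\<exists>b\<in>S. a = fmul (fstar b) b)"

definition le_in :: "fn set \<Rightarrow> fn \<Rightarrow> fn \<Rightarrow> bool" where
  "le_in S a b \<longleftrightarrow> positive_in S (fdiff b a)"

definition monotone_sigma_complete :: "fn set \<Rightarrow> bool" where
  "monotone_sigma_complete S \<longleftrightarrow>
    (\<forall>x :: nat \<Rightarrow> fn.
       (\<forall>n. x n \<in> S \<and> selfadj (x n)) \<and> (\<forall>n. le_in S (x n) (x (Suc n))) \<and>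
       (\<exists>M. \<forall>n. supnorm (x n) \<le> M) \<longrightarrow>
       (\<exists>s\<in>S. selfadj s \<and> (\<forall>n. le_in S (x n) s) \<and>
          (\<forall>u\<in>S. selfadj u \<and> (\<forall>n. le_in S (x n) u) \<longrightarrow> le_in S s u)))"

definition projection_in :: "fn set \<Rightarrow> fn \<Rightarrow> bool" where
  "projection_in S p \<longleftrightarrow> p \<in> S \<and> fstar p = p \<and> fmul p p = p"

definition rickart :: "fn set \<Rightarrow> bool" where
  "rickart S \<longleftrightarrow> (\<forall>a\<in>S. \<exists>p. projection_in S p \<and>
      {z \<in> S. fmul a z = (\<lambda>t. 0)} = {fmul p y | y. y \<in> S})"

end

theory Submission
  imports Defs
begin

lemma BR_iff: "f \<in> BR \<longleftrightarrow> (\<exists>M. \<forall>t. cmod (f t) \<le> M)"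
  unfolding BR_def by (auto simp: Elementary_Metric_Spaces.bounded_iff)

lemma A_iff: "f \<in> A_alg \<longleftrightarrow> (\<exists>M. \<forall>t. cmod (f t) \<le> M) \<and> countable {t. f t \<noteq> 0}"
  unfolding A_alg_def using BR_iff by auto

lemma supnorm_ge: "f \<in> BR \<Longrightarrow> cmod (f t) \<le> supnorm f"
  unfolding supnorm_def BR_iff
  by (rule cSUP_upper) (auto simp: bdd_above_def)

lemma supnorm_le: "(\<And>t. cmod (f t) \<le> M) \<Longrightarrow> supnorm f \<le> M"
  unfolding supnorm_def by (rule cSUP_least) auto

lemma BR_diff: assumes "f \<in> BR" "g \<in> BR" shows "fdiff f g \<in> BR"
proof -
  obtain M where M: "\<forall>t. cmod (f t) \<le> M" using assms(1) unfolding BR_iff by blast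
  obtain N where N: "\<forall>t. cmod (g t) \<le> N" using assms(2) unfolding BR_iff by blast
  have "\<forall>t. cmod (f t - g t) \<le> M + N"
  proof
    fix t have "cmod (f t - g t) \<le> cmod (f t) + cmod (g t)" by (rule norm_triangle_ineq4)
    moreover have "cmod (f t) + cmod (g t) \<le> M + N" using M N by (simp add: add_mono)
    ultimately show "cmod (f t - g t) \<le> M + N" by linarith
  qed
  thus ?thesis unfolding BR_iff fdiff_def by blast
qed

lemma A_add: assumes "f \<in> A_alg" "g \<in> A_alg" shows "fadd f g \<in> A_alg"
proof -
  obtain M where M: "\<forall>t. cmod (f t) \<le> M" and c1: "countable {t. f t \<noteq> 0}"
    using assms(1) unfolding A_iff by blast
  obtain N where N: "\<forall>t. cmod (g t) \<le> N" and c2: "countable {t. g t \<noteq> 0}"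
    using assms(2) unfolding A_iff by blast
  have c: "countable {t. f t \<noteq> 0}" "countable {t. g t \<noteq> 0}" using c1 c2 by auto
  have "\<forall>t. cmod (f t + g t) \<le> M + N"
  proof
    fix t have "cmod (f t + g t) \<le> cmod (f t) + cmod (g t)" by (rule norm_triangle_ineq)
    moreover have "cmod (f t) + cmod (g t) \<le> M + N" using M N by (simp add: add_mono)
    ultimately show "cmod (f t + g t) \<le> M + N" by linarith
  qed
  moreover have "{t. f t + g t \<noteq> 0} \<subseteq> {t. f t \<noteq> 0} \<union> {t. g t \<noteq> 0}" by auto
  hence "countable {t. f t + g t \<noteq> 0}" using c by (meson countable_Un countable_subset)
  ultimately show ?thesis unfolding A_iff fadd_def by blast
qed

lemma A_mul: assumes "f \<in> A_alg" "g \<in> A_alg" shows "fmul f g \<in> A_alg"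
proof -
  obtain M where M: "\<forall>t. cmod (f t) \<le> M" and c: "countable {t. f t \<noteq> 0}"
    using assms(1) unfolding A_iff by blast
  obtain N where N: "\<forall>t. cmod (g t) \<le> N"
    using assms(2) unfolding A_iff by blast
  have "\<forall>t. cmod (f t * g t) \<le> M * N"
  proof
    fix t have "cmod (f t) * cmod (g t) \<le> M * N"
      using M N by (intro mult_mono) (auto intro: order_trans[OF norm_ge_zero])
    thus "cmod (f t * g t) \<le> M * N" by (simp add: norm_mult)
  qed
  moreover have "{t. f t * g t \<noteq> 0} \<subseteq> {t. f t \<noteq> 0}" by auto
  hence "countable {t. f t * g t \<noteq> 0}" using c countable_subset by blast
  ultimately show ?thesis unfolding A_iff fmul_def by blast
qed

lemma A_scale: assumes "f \<in> A_alg" shows "fscale c f \<in> A_alg"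
proof -
  obtain M where M: "\<forall>t. cmod (f t) \<le> M"
    and c: "countable {t. f t \<noteq> 0}" using assms A_iff by blast
  have "\<forall>t. cmod (c * f t) \<le> cmod c * M"
    using M by (simp add: norm_mult mult_left_mono del: mult_le_cancel_left1 mult_le_cancel_left2)
  moreover have "{t. c * f t \<noteq> 0} \<subseteq> {t. f t \<noteq> 0}" by auto
  hence "countable {t. c * f t \<noteq> 0}" using c countable_subset by blast
  ultimately show ?thesis unfolding A_iff fscale_def by blast
qed

lemma A_star: assumes "f \<in> A_alg" shows "fstar f \<in> A_alg"
  using assms unfolding A_iff fstar_def by simp

lemma A_diff: assumes "f \<in> A_alg" "g \<in> A_alg" shows "fdiff f g \<in> A_alg"
proof -
  have "fdiff f g = fadd f (fscale (-1) g)"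
    by (auto simp: fdiff_def fadd_def fscale_def)
  thus ?thesis using assms A_add A_scale by simp
qed

lemma pos_iff: "positive_in A_alg a \<longleftrightarrow> a \<in> A_alg \<and> (\<forall>t. Im (a t) = 0 \<and> 0 \<le> Re (a t))"
proof
  assume "positive_in A_alg a"
  then obtain b where b: "b \<in> A_alg" "a = fmul (fstar b) b" unfolding positive_in_def by blast
  have "a \<in> A_alg" using b A_mul A_star by simp
  moreover have "a t = complex_of_real ((cmod (b t))^2)" for t
    using b(2) complex_norm_square[of "b t"] by (simp add: fmul_def fstar_def mult.commute)
  ultimately show "a \<in> A_alg \<and> (\<forall>t. Im (a t) = 0 \<and> 0 \<le> Re (a t))" by simp
next
  assume h: "a \<in> A_alg \<and> (\<forall>t. Im (a t) = 0 \<and> 0 \<le> Re (a t))"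
  define b where "b = (\<lambda>t. complex_of_real (sqrt (Re (a t))))"
  obtain M where M: "\<forall>t. cmod (a t) \<le> M" and c: "countable {t. a t \<noteq> 0}" using h unfolding A_iff by blast
  have "\<forall>t. cmod (b t) \<le> 1 + M"
  proof
    fix t
    have "Re (a t) \<le> M" using M[rule_format, of t] complex_Re_le_cmod order_trans by blast
    moreover have r0: "0 \<le> Re (a t)" using h by blast
    moreover have "Re (a t) \<le> (1 + Re (a t))^2"
    proof -
      have "(1 + Re (a t))^2 = 1 + 2 * Re (a t) + Re (a t) * Re (a t)"
        by (simp add: power2_eq_square algebra_simps)
      moreover have "0 \<le> Re (a t) * Re (a t)" by simp
      ultimately show ?thesis using r0 by linarith
    qed
    hence "sqrt (Re (a t)) \<le> sqrt ((1 + Re (a t))^2)" by (rule real_sqrt_le_mono)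
    hence "sqrt (Re (a t)) \<le> 1 + Re (a t)" using r0 by simp
    ultimately have "sqrt (Re (a t)) \<le> 1 + M" by linarith
    moreover have "0 \<le> sqrt (Re (a t))" using r0 by simp
    ultimately have "sqrt (Re (a t)) \<le> 1 + M" "0 \<le> sqrt (Re (a t))" by auto
    thus "cmod (b t) \<le> 1 + M" unfolding b_def by simp
  qed
  moreover have "{t. b t \<noteq> 0} \<subseteq> {t. a t \<noteq> 0}" using h unfolding b_def
    by (auto simp: complex_eq_iff)
  hence "countable {t. b t \<noteq> 0}" using c countable_subset by blast
  ultimately have "b \<in> A_alg" unfolding A_iff by blast
  moreover have "a = fmul (fstar b) b"
    using h by (auto simp: fmul_def fstar_def b_def complex_eq_iff)
  ultimately show "positive_in A_alg a" unfolding positive_in_def by blast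
qed

lemma le_iff: assumes "a \<in> A_alg" "b \<in> A_alg"
  shows "le_in A_alg a b \<longleftrightarrow> (\<forall>t. Im (b t) = Im (a t) \<and> Re (a t) \<le> Re (b t))"
  unfolding le_in_def pos_iff using A_diff[OF assms(2,1)] by (auto simp: fdiff_def)

lemma delta_A: "(\<lambda>s. if s = t then 1 else 0) \<in> A_alg"
proof -
  have "{s. (if s = t then 1 else 0::complex) \<noteq> 0} = {t}" by auto
  moreover have "\<forall>s. cmod (if s = t then 1 else 0::complex) \<le> 1" by simp
  ultimately show ?thesis unfolding A_iff by (metis countable_finite finite.emptyI finite_insert)
qed

lemma ex_zero: fixes f :: fn assumes "countable {t. f t \<noteq> 0}" shows "\<exists>t. f t = 0"
proof (rule ccontr)
  assume "\<not> ?thesis"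
  hence "{t. f t \<noteq> 0} = UNIV" by auto
  thus False using assms uncountable_UNIV_real by simp
qed

lemma L_cs: "cstar_subalgebra A_alg"
  unfolding cstar_subalgebra_def
proof (intro conjI ballI allI impI)
  show "A_alg \<subseteq> BR" unfolding A_alg_def by auto
  show "(\<lambda>t. 0) \<in> A_alg" unfolding A_iff by auto
next
  fix f g assume "f \<in> A_alg" "g \<in> A_alg"
  thus "fadd f g \<in> A_alg" "fmul f g \<in> A_alg" using A_add A_mul by auto
next
  fix c f assume "f \<in> A_alg" thus "fscale c f \<in> A_alg" by (rule A_scale)
next
  fix f assume "f \<in> A_alg" thus "fstar f \<in> A_alg" by (rule A_star)
next
  fix x g assume h: "(\<forall>n. x n \<in> A_alg) \<and> g \<in> BR \<and> (\<lambda>n. supnorm (fdiff (x n) g)) \<longlonglongrightarrow> 0"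
  have sub: "{t. g t \<noteq> 0} \<subseteq> (\<Union>n. {t. x n t \<noteq> 0})"
  proof
    fix t assume "t \<in> {t. g t \<noteq> 0}"
    hence gt: "cmod (g t) > 0" by simp
    from order_tendstoD(2)[OF conjunct2[OF conjunct2[OF h]] gt]
    obtain n where n: "supnorm (fdiff (x n) g) < cmod (g t)"
      by (meson eventually_sequentially order.refl)
    have "x n \<in> BR" using h unfolding A_alg_def by blast
    hence "fdiff (x n) g \<in> BR" using h BR_diff by blast
    hence "cmod (x n t - g t) \<le> supnorm (fdiff (x n) g)"
      using supnorm_ge[of "fdiff (x n) g" t] by (simp add: fdiff_def)
    hence "x n t \<noteq> 0" using n by (metis diff_zero norm_minus_commute not_le order_trans)
    thus "t \<in> (\<Union>n. {t. x n t \<noteq> 0})" by auto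
  qed
  have "countable (\<Union>n. {t. x n t \<noteq> 0})" using h unfolding A_alg_def by auto
  hence "countable {t. g t \<noteq> 0}" using sub by (rule countable_subset[rotated])
  thus "g \<in> A_alg" using h unfolding A_alg_def by auto
qed

lemma L_com: "commutative_alg A_alg" unfolding commutative_alg_def fmul_def
  by (simp add: mult.commute)

lemma L_nu: "\<not> unital_alg A_alg"
proof
  assume "unital_alg A_alg"
  then obtain e where e: "e \<in> A_alg" "\<forall>f\<in>A_alg. fmul e f = f" unfolding unital_alg_def by blast
  have "countable {t. e t \<noteq> 0}" using e(1) unfolding A_alg_def by simp
  then obtain t where t: "e t = 0" using ex_zero by blast
  have "fmul e (\<lambda>s. if s = t then 1 else 0) = (\<lambda>s. if s = t then 1 else 0)"
    using e(2) delta_A[of t] by (rule bspec)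
  hence "fmul e (\<lambda>s. if s = t then 1 else 0) t = 1" by simp
  thus False using t by (simp add: fmul_def)
qed

lemma L_nr: "\<not> rickart A_alg"
proof
  assume r: "rickart A_alg"
  have z0: "(\<lambda>t. 0) \<in> A_alg" unfolding A_iff by (auto intro: exI[of _ 0])
  obtain p where p: "projection_in A_alg p"
    "{z \<in> A_alg. fmul (\<lambda>t. 0) z = (\<lambda>t. 0)} = {fmul p y | y. y \<in> A_alg}"
    using r z0 unfolding rickart_def by blast
  have "countable {t. p t \<noteq> 0}" using p(1) unfolding projection_in_def A_alg_def by simp
  then obtain t where t: "p t = 0" using ex_zero by blast
  have "(\<lambda>s. if s = t then 1 else 0) \<in> {z \<in> A_alg. fmul (\<lambda>t. 0) z = (\<lambda>t. 0)}"
    using delta_A[of t] by (simp add: fmul_def)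
  hence "(\<lambda>s. if s = t then 1 else 0) \<in> {fmul p y | y. y \<in> A_alg}" using p(2) by simp
  then obtain y where "(\<lambda>s. if s = t then 1 else 0) = fmul p y" by blast
  hence "(\<lambda>s. if s = t then 1 else 0) t = fmul p y t" by (rule fun_cong)
  hence "(1::complex) = p t * y t" unfolding fmul_def by simp
  thus False using t by simp
qed

lemma L_ms: "monotone_sigma_complete A_alg"
  unfolding monotone_sigma_complete_def
proof (intro allI impI)
  fix x :: "nat \<Rightarrow> fn"
  assume h: "(\<forall>n. x n \<in> A_alg \<and> selfadj (x n)) \<and> (\<forall>n. le_in A_alg (x n) (x (Suc n))) \<and>
     (\<exists>M. \<forall>n. supnorm (x n) \<le> M)"
  obtain M where M: "\<forall>n. supnorm (x n) \<le> M" using h by blast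
  have xA: "x n \<in> A_alg" for n using h by blast
  have sa: "selfadj (x n)" for n using h by blast
  have im: "Im (x n t) = 0" for n t
  proof -
    have "fstar (x n) = x n" using sa[of n] unfolding selfadj_def .
    hence "fstar (x n) t = x n t" by simp
    thus ?thesis by (simp add: fstar_def complex_eq_iff)
  qed
  have xM: "cmod (x n t) \<le> M" for n t
  proof -
    have "x n \<in> BR" using xA[of n] unfolding A_alg_def by simp
    hence "cmod (x n t) \<le> supnorm (x n)" by (rule supnorm_ge)
    thus ?thesis using M[rule_format, of n] by linarith
  qed
  have stp: "Re (x n t) \<le> Re (x (Suc n) t)" for n t
  proof -
    have "le_in A_alg (x n) (x (Suc n))" using h by blast
    thus ?thesis using le_iff[OF xA xA] by blast
  qed
  have bdd: "bdd_above (range (\<lambda>n. Re (x n t)))" for t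
  proof -
    have "\<forall>n. Re (x n t) \<le> M" using xM complex_Re_le_cmod order_trans by blast
    thus ?thesis unfolding bdd_above_def by blast
  qed
  define s where "s = (\<lambda>t. complex_of_real (SUP n. Re (x n t)))"
  have sup_ge: "Re (x n t) \<le> Re (s t)" for n t
    unfolding s_def using cSUP_upper[OF _ bdd] by simp
  have sup_le: "(\<And>n. Re (x n t) \<le> c) \<Longrightarrow> Re (s t) \<le> c" for t c
    unfolding s_def by (simp add: cSUP_least)
  have sim: "Im (s t) = 0" for t unfolding s_def by simp
  have sA: "s \<in> A_alg"
  proof -
    have "\<forall>t. cmod (s t) \<le> M"
    proof
      fix t
      have "Re (x n t) \<le> M" for n using xM[of n t] complex_Re_le_cmod[of "x n t"] by linarith
      hence "Re (s t) \<le> M" by (rule sup_le)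
      moreover have "-M \<le> Re (s t)" using sup_ge[of 0 t] xM[of 0 t] abs_Re_le_cmod[of "x 0 t"]
        by linarith
      ultimately show "cmod (s t) \<le> M" unfolding s_def by simp
    qed
    moreover have "{t. s t \<noteq> 0} \<subseteq> (\<Union>n. {t. x n t \<noteq> 0})"
    proof
      fix t assume t: "t \<in> {t. s t \<noteq> 0}"
      show "t \<in> (\<Union>n. {t. x n t \<noteq> 0})"
      proof (rule ccontr)
        assume "t \<notin> (\<Union>n. {t. x n t \<noteq> 0})"
        hence "\<forall>n. x n t = 0" by auto
        hence "s t = 0" unfolding s_def by simp
        thus False using t by simp
      qed
    qed
    moreover have "countable (\<Union>n. {t. x n t \<noteq> 0})"
    proof (rule countable_UN)
      fix n show "countable {t. x n t \<noteq> 0}" using xA[of n] unfolding A_alg_def by simp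
    qed simp
    ultimately have "countable {t. s t \<noteq> 0}" by (meson countable_subset)
    with \<open>\<forall>t. cmod (s t) \<le> M\<close> show ?thesis unfolding A_iff by blast
  qed
  show "\<exists>s\<in>A_alg. selfadj s \<and> (\<forall>n. le_in A_alg (x n) s) \<and>
        (\<forall>u\<in>A_alg. selfadj u \<and> (\<forall>n. le_in A_alg (x n) u) \<longrightarrow> le_in A_alg s u)"
  proof (intro bexI[of _ s] conjI allI ballI impI)
    show "s \<in> A_alg" by (rule sA)
    show "selfadj s" unfolding selfadj_def fstar_def s_def by simp
    fix n
    have "\<forall>t. Im (s t) = Im (x n t) \<and> Re (x n t) \<le> Re (s t)" using sup_ge im sim by simp
    thus "le_in A_alg (x n) s" using le_iff[OF xA sA] by blast
  next
    fix u assume u: "u \<in> A_alg" "selfadj u \<and> (\<forall>n. le_in A_alg (x n) u)"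
    have c: "\<forall>t. Im (u t) = Im (x n t) \<and> Re (x n t) \<le> Re (u t)" for n
    proof -
      have "le_in A_alg (x n) u" using u(2) by blast
      thus ?thesis using le_iff[OF xA u(1)] by blast
    qed
    have "\<forall>t. Im (u t) = Im (s t) \<and> Re (s t) \<le> Re (u t)"
    proof
      fix t
      have "Re (x n t) \<le> Re (u t)" for n using c by blast
      hence "Re (s t) \<le> Re (u t)" by (rule sup_le)
      moreover have "Im (u t) = Im (s t)" using c[of 0] im sim by simp
      ultimately show "Im (u t) = Im (s t) \<and> Re (s t) \<le> Re (u t)" by simp
    qed
    thus "le_in A_alg s u" using le_iff[OF sA u(1)] by blast
  qed
qed

theorem mainTheorem11:
  shows "cstar_subalgebra A_alg \<and> commutative_alg A_alg \<and> \<not> unital_alg A_alg \<and>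
         monotone_sigma_complete A_alg \<and> \<not> rickart A_alg"
  using L_cs L_com L_nu L_ms L_nr by blast

end
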